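(* Let $\mathcal{Y}=\{0,1\}$, let $\mathcal{X},\Phi$ be the natural feature construction, and for $n\in\mathbb{N}$ let $T_n=(f_n,\psi_n)$ where $\psi_n(x,x')=f_n$ if $f_n(x)=1,f_n(x')=0$; $\psi_n(x,x')=\neg f_n$ if $f_n(x)=0,f_n(x')=1$; and $\psi_n(x,x')=\bot$ otherwise. Let $\mathcal{T}=\{T_n:n\in\mathbb{N}\}$ and $H=\{(\bar 0,0),(\bar 1,1)\}$. Then $\mathrm{DFFdim}(\mathcal{T},H)=1$, while $\mathrm{Ldim}(\mathrm{DtO}(\mathcal{T},H))=\infty$; moreover there is a Littlestone tree of infinite depth shattered by $\mathrm{DtO}(\mathcal{T},H)$.
   Context: Setting. A teacher over $\mathcal{X},\mathcal{Y},\Phi$ ($\mathcal{Y}$ finite, $\Phi$ a set of Boolean features on $\mathcal{X}$, $\bot$ a null symbol) is a pair $T=(\ell,\psi)$ with $\ell:\mathcal{X}\to\mathcal{Y}$ and $\psi:\mathcal{X}\times\mathcal{X}\to\Phi\cup\{\bot\}$ such that whenever $\ell(x)\neq\ell(\hat x)$, $\phi:=\psi(x,\hat x)\in\Phi$, $\phi(x)=1$ and $\phi(\hat x)=0$. A teacher class is a set of teachers. A history is a non-empty set $H\subseteq\mathcal{X}\times\mathcal{Y}$, $H_{\mathcal{X}}=\{x:\exists y,(x,y)\in H\}$; a teacher $(\ell,\psi)$ is consistent with $H$ if $\ell(x)=y$ for all $(x,y)\in H$; $\mathcal{T}_H$ is the set of teachers in $\mathcal{T}$ consistent with $H$. DFF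 dimension. A DFF tree is a rooted tree whose nodes are triples $\langle y,\phi,x\rangle$ with $y\in\mathcal{Y}\cup\{\bot\}$, $\phi\in\Phi\cup\{\bot\}$, $x\in\mathcal{X}\cup\{\bot\}$, such that the root has $y=\phi=\bot$, a node has $x=\bot$ iff it is a leaf, every edge is labeled by a pair $(\hat x,\hat y)\in\mathcal{X}\times\mathcal{Y}$, and every non-root node $\langle y,\phi,x\rangle$ with incoming edge $(\hat x,\hat y)$ has $\phi\neq\bot$ whenever $y\neq\hat y$. For a parent–child pair $\langle\cdot,\cdot,x\rangle\xrightarrow{(\hat x,\hat y)}\langle y,\phi,\cdot\rangle$ on a path, $(x,y)$ is called a labeled example in that path. A path from the root is consistent with a teacher $(\ell,\psi)$ if for every such parent–child pair on it, $\ell(x)=y$ and, if $y\neq\hat y$, $\psi(x,\hat x)=\phi$. Given $\mathcal{T}$ consistent with $H$, a DFF tree is shattered by $\mathcal{T}$ and $H$ if: (1) every non-root node $\langle y,\phi,x\rangle$ with incoming edge $(\hat x,\hat y)$ has $y\neq\hat y$; (2) the labels of the outgoing edges of each non-leaf node $v$ are exactly the pairs that belong to $H$ or are labeled examples in the path from the root to $v$; (3) every root-to-leaf path is consistent with some teacher in $\mathcal{T}_H$; (4) all root-to-leaf paths have the same number of edges, called the height. $\mathrm{DFFdim}(\mathcal{T},H)$ is the maximal height of a DFF tree shattered by $\mathcal{T}$ and $H$. Natural feature construction: $\mathcal{X}=\{0,1\}^{\mathbb{N}}$, $f_n(x)=x(n)$, $\Phi=\bigcup_{n\in\mathbb{N}}\{f_n,\neg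 f_n\}$ with $\neg f_n=1-f_n$; $\bar 0,\bar 1$ are the all-zero and all-one vectors. $\mathrm{Ldim}$ is the Littlestone dimension: the maximal depth of a complete binary tree whose internal nodes are labeled by examples and whose two outgoing edges at each internal node are labeled by two distinct labels, such that for every root-to-leaf path some function in the class agrees with all (example, edge label) pairs on the path; an infinite-depth tree is shattered if every finite path from the root is realized by some function in the class. Mapping DtO: given $\mathcal{T}$ and $H$, let $\mathcal{X}''=\mathcal{X}\setminus H_{\mathcal{X}}$; then $\mathrm{DtO}(\mathcal{T},H)=\{\ell|_{\mathcal{X}''}:(\ell,\psi)\in\mathcal{T}\}$. *)

theory Defs
  imports Main "HOL-Library.Extended_Nat"
begin

text \<open>Instances have type 'x, labels type 'y (Y = UNIV :: 'y set), Boolean features on 'x are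
  predicates 'x => bool; the null symbol bottom is None.\<close>

type_synonym ('x,'y) teacher = "('x \<Rightarrow> 'y) \<times> ('x \<Rightarrow> 'x \<Rightarrow> ('x \<Rightarrow> bool) option)"

definition is_teacher :: "('x \<Rightarrow> bool) set \<Rightarrow> ('x,'y) teacher \<Rightarrow> bool" where
  "is_teacher Phi T \<longleftrightarrow> (case T of (l, psi) \<Rightarrow>
     (\<forall>x x'. psi x x' \<in> Some ` Phi \<union> {None}) \<and>
     (\<forall>x x'. l x \<noteq> l x' \<longrightarrow> (\<exists>\<phi>. psi x x' = Some \<phi> \<and> \<phi> \<in> Phi \<and> \<phi> x \<and> \<not> \<phi> x')))"

definition hist_X :: "('x \<times> 'y) set \<Rightarrow> 'x set" where
  "hist_X H = {x. \<exists>y. (x, y) \<in> H}"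

definition consistent_with :: "('x \<times> 'y) set \<Rightarrow> ('x,'y) teacher \<Rightarrow> bool" where
  "consistent_with H T \<longleftrightarrow> (\<forall>(x, y) \<in> H. fst T x = y)"

definition teachers_H :: "('x,'y) teacher set \<Rightarrow> ('x \<times> 'y) set \<Rightarrow> ('x,'y) teacher set" where
  "teachers_H TT H = {T \<in> TT. consistent_with H T}"

text \<open>A node carries the triple (y, phi, x) (each possibly bottom = None) and a map from edge labels
  (x^, y^) in X \<times> Y to the (optional) child reached by the edge with that label.\<close>

datatype ('x,'y) dfft =
  DNode (nY: "'y option") (nPhi: "('x \<Rightarrow> bool) option") (nX: "'x option")
        (nCh: "'x \<times> 'y \<Rightarrow> ('x,'y) dfft option")

definition is_leaf :: "('x,'y) dfft \<Rightarrow> bool" where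
  "is_leaf v \<longleftrightarrow> (\<forall>l. nCh v l = None)"

text \<open>Root-to-leaf paths, as the list of (edge label, child node) steps.\<close>

inductive is_path :: "('x,'y) dfft \<Rightarrow> (('x \<times> 'y) \<times> ('x,'y) dfft) list \<Rightarrow> bool" where
  leaf: "is_leaf v \<Longrightarrow> is_path v []"
| step: "nCh v l = Some c \<Longrightarrow> is_path c p \<Longrightarrow> is_path v ((l, c) # p)"

text \<open>Nodes on a path starting at v (v itself is node 0).\<close>

definition path_nodes :: "('x,'y) dfft \<Rightarrow> (('x \<times> 'y) \<times> ('x,'y) dfft) list \<Rightarrow> ('x,'y) dfft list" where
  "path_nodes v p = v # map snd p"

text \<open>Labeled examples (x, y) of a path starting at v: x from the parent, y from the child.\<close>

fun lab_ex :: "('x,'y) dfft \<Rightarrow> (('x \<times> 'y) \<times> ('x,'y) dfft) list \<Rightarrow> ('x \<times> 'y option) set" where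
  "lab_ex v [] = {}"
| "lab_ex v ((l, c) # p) = {(x, nY c) | x. nX v = Some x} \<union> lab_ex c p"

fun path_consistent :: "('x,'y) teacher \<Rightarrow> ('x,'y) dfft \<Rightarrow> (('x \<times> 'y) \<times> ('x,'y) dfft) list \<Rightarrow> bool" where
  "path_consistent T v [] = True"
| "path_consistent T v ((l, c) # p) =
     ((\<forall>x. nX v = Some x \<longrightarrow>
          nY c = Some (fst T x) \<and> (nY c \<noteq> Some (snd l) \<longrightarrow> snd T x (fst l) = nPhi c))
      \<and> path_consistent T c p)"

text \<open>Well-formedness of a DFF tree with root r over feature set Phi (every node lies on some
  root-to-leaf path, since trees of the datatype are finite).\<close>

definition dff_tree :: "('x \<Rightarrow> bool) set \<Rightarrow> ('x,'y) dfft \<Rightarrow> bool" where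
  "dff_tree Phi r \<longleftrightarrow> nY r = None \<and> nPhi r = None \<and>
    (\<forall>p. is_path r p \<longrightarrow>
       (\<forall>v \<in> set (path_nodes r p). (nX v = None \<longleftrightarrow> is_leaf v) \<and> nPhi v \<in> Some ` Phi \<union> {None}) \<and>
       (\<forall>(l, c) \<in> set p. nY c \<noteq> Some (snd l) \<longrightarrow> nPhi c \<noteq> None))"

definition dff_shattered ::
  "('x \<Rightarrow> bool) set \<Rightarrow> ('x,'y) teacher set \<Rightarrow> ('x \<times> 'y) set \<Rightarrow> ('x,'y) dfft \<Rightarrow> nat \<Rightarrow> bool" where
  "dff_shattered Phi TT H r n \<longleftrightarrow> dff_tree Phi r \<and>
    (\<forall>p. is_path r p \<longrightarrow>
       \<comment> \<open>(1)\<close>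
       (\<forall>(l, c) \<in> set p. nY c \<noteq> Some (snd l)) \<and>
       \<comment> \<open>(2)\<close>
       (\<forall>k < length p. {l. nCh (path_nodes r p ! k) l \<noteq> None}
            = H \<union> {(x, y). (x, Some y) \<in> lab_ex r (take k p)}) \<and>
       \<comment> \<open>(3)\<close>
       (\<exists>T \<in> teachers_H TT H. path_consistent T r p) \<and>
       \<comment> \<open>(4)\<close>
       length p = n)"

definition DFFdim :: "('x \<Rightarrow> bool) set \<Rightarrow> ('x,'y) teacher set \<Rightarrow> ('x \<times> 'y) set \<Rightarrow> enat" where
  "DFFdim Phi TT H = Sup {enat n | n. \<exists>r. dff_shattered Phi TT H r n}"

text \<open>Hypotheses are partial functions (maps) 'x \<rightharpoonup> 'y; h agrees with (x,y) iff h x = Some y.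
  A (binary) Littlestone tree assigns to each node, addressed by the list of edge choices from the
  root (False = first edge, True = second edge), an example x and two distinct edge labels.\<close>

type_synonym ('x,'y) ltree = "bool list \<Rightarrow> 'x \<times> 'y \<times> 'y"

definition ledge :: "('x,'y) ltree \<Rightarrow> bool list \<Rightarrow> bool \<Rightarrow> 'y" where
  "ledge t a b = (if b then snd (snd (t a)) else fst (snd (t a)))"

definition realizes_branch :: "('x \<rightharpoonup> 'y) \<Rightarrow> ('x,'y) ltree \<Rightarrow> bool list \<Rightarrow> bool" where
  "realizes_branch h t bs \<longleftrightarrow>
     (\<forall>i < length bs. h (fst (t (take i bs))) = Some (ledge t (take i bs) (bs ! i)))"

definition ltree_shattered :: "('x \<rightharpoonup> 'y) set \<Rightarrow> ('x,'y) ltree \<Rightarrow> nat \<Rightarrow> bool" where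
  "ltree_shattered C t d \<longleftrightarrow>
     (\<forall>a. length a < d \<longrightarrow> fst (snd (t a)) \<noteq> snd (snd (t a))) \<and>
     (\<forall>bs. length bs = d \<longrightarrow> (\<exists>h \<in> C. realizes_branch h t bs))"

definition ltree_shattered_inf :: "('x \<rightharpoonup> 'y) set \<Rightarrow> ('x,'y) ltree \<Rightarrow> bool" where
  "ltree_shattered_inf C t \<longleftrightarrow>
     (\<forall>a. fst (snd (t a)) \<noteq> snd (snd (t a))) \<and>
     (\<forall>bs. \<exists>h \<in> C. realizes_branch h t bs)"

definition Ldim :: "('x \<rightharpoonup> 'y) set \<Rightarrow> enat" where
  "Ldim C = Sup {enat d | d. \<exists>t. ltree_shattered C t d}"

definition DtO :: "('x,'y) teacher set \<Rightarrow> ('x \<times> 'y) set \<Rightarrow> ('x \<rightharpoonup> 'y) set" where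
  "DtO TT H = {(Some \<circ> l) |` (UNIV - hist_X H) | l psi. (l, psi) \<in> TT}"

section \<open>Natural feature construction (X = {0,1}^N as nat => bool, 0/1 as False/True)\<close>

definition feat :: "nat \<Rightarrow> (nat \<Rightarrow> bool) \<Rightarrow> bool" where
  "feat n = (\<lambda>x. x n)"

definition nfeat :: "nat \<Rightarrow> (nat \<Rightarrow> bool) \<Rightarrow> bool" where
  "nfeat n = (\<lambda>x. \<not> x n)"

definition natPhi :: "((nat \<Rightarrow> bool) \<Rightarrow> bool) set" where
  "natPhi = range feat \<union> range nfeat"

definition zero_vec :: "nat \<Rightarrow> bool" where "zero_vec = (\<lambda>_. False)"
definition one_vec :: "nat \<Rightarrow> bool" where "one_vec = (\<lambda>_. True)"

definition psi_n :: "nat \<Rightarrow> (nat \<Rightarrow> bool) \<Rightarrow> (nat \<Rightarrow> bool) \<Rightarrow> ((nat \<Rightarrow> bool) \<Rightarrow> bool) option" where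
  "psi_n n x x' = (if feat n x \<and> \<not> feat n x' then Some (feat n)
                   else if \<not> feat n x \<and> feat n x' then Some (nfeat n) else None)"

definition T_n :: "nat \<Rightarrow> (nat \<Rightarrow> bool, bool) teacher" where
  "T_n n = (feat n, psi_n n)"

end

theory Submission
  imports Defs "HOL-Library.Countable"
begin

lemma ex_path: "\<exists>p. is_path v p"
proof (induction v)
  case (DNode y ph x ch)
  show ?case
  proof (cases "is_leaf (DNode y ph x ch)")
    case True
    then show ?thesis using is_path.leaf by blast
  next
    case False
    then obtain l c where lc: "ch l = Some c" unfolding is_leaf_def by auto
    have "ch l \<in> range ch" by simp
    moreover have "c \<in> set_option (ch l)" using lc by simp
    ultimately obtain p where "is_path c p" using DNode.IH by blast
    then show ?thesis using lc is_path.step[of "DNode y ph x ch" l c p] by auto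
  qed
qed

lemma path_leaf: "is_path v p \<Longrightarrow> is_leaf v \<Longrightarrow> p = []"
  by (cases rule: is_path.cases) (auto simp: is_leaf_def)

lemma feat_inj: "feat a = feat b \<Longrightarrow> a = b"
proof -
  assume "feat a = feat b"
  then have "feat a (\<lambda>i. i = a) = feat b (\<lambda>i. i = a)" by simp
  then show "a = b" by (simp add: feat_def)
qed

lemma no_height2:
  assumes H: "H = {(zero_vec, False), (one_vec, True)}" and TT: "TT = range T_n"
    and sh: "dff_shattered natPhi TT H r n" and n2: "n \<ge> 2"
  shows False
proof -
  have tr: "dff_tree natPhi r" using sh unfolding dff_shattered_def by auto
  have P1: "\<And>p. is_path r p \<Longrightarrow> (\<forall>(l, c) \<in> set p. nY c \<noteq> Some (snd l))"
    using sh unfolding dff_shattered_def by blast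
  have P2: "\<And>p k. is_path r p \<Longrightarrow> k < length p \<Longrightarrow> {l. nCh (path_nodes r p ! k) l \<noteq> None}
            = H \<union> {(x, y). (x, Some y) \<in> lab_ex r (take k p)}"
    using sh unfolding dff_shattered_def by blast
  have P3: "\<And>p. is_path r p \<Longrightarrow> (\<exists>T \<in> teachers_H TT H. path_consistent T r p)"
    using sh unfolding dff_shattered_def by blast
  have P4: "\<And>p. is_path r p \<Longrightarrow> length p = n"
    using sh unfolding dff_shattered_def by blast
  have Tr: "\<And>p. is_path r p \<Longrightarrow>
       (\<forall>v \<in> set (path_nodes r p). (nX v = None \<longleftrightarrow> is_leaf v))"
    using tr unfolding dff_tree_def by blast
  obtain p0 where p0: "is_path r p0" using ex_path by blast
  have "length p0 = n" using P4[OF p0] .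
  then have "p0 \<noteq> []" using n2 by auto
  then have nl: "\<not> is_leaf r" using path_leaf p0 by blast
  have "{l. nCh (path_nodes r p0 ! 0) l \<noteq> None} = H \<union> {(x, y). (x, Some y) \<in> lab_ex r (take 0 p0)}"
    using P2[OF p0] \<open>p0 \<noteq> []\<close> by simp
  then have E0: "{l. nCh r l \<noteq> None} = H" by (simp add: path_nodes_def)
  then obtain c0 where c0: "nCh r (zero_vec, False) = Some c0" using H by auto
  obtain x where x: "nX r = Some x" using Tr[OF p0] nl by (auto simp: path_nodes_def)
  obtain q0 where q0: "is_path c0 q0" using ex_path by blast
  define p1 where "p1 = ((zero_vec, False), c0) # q0"
  have p1: "is_path r p1" unfolding p1_def using c0 q0 by (rule is_path.step)
  have "length p1 = n" using P4[OF p1] .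
  then have "1 < length p1" using n2 by auto
  then have "{l. nCh (path_nodes r p1 ! 1) l \<noteq> None} = H \<union> {(x, y). (x, Some y) \<in> lab_ex r (take 1 p1)}"
    using P2[OF p1] by simp
  then have E1: "H \<subseteq> {l. nCh c0 l \<noteq> None}" by (auto simp: path_nodes_def p1_def)
  obtain d where d: "nCh c0 (zero_vec, False) = Some d" using E1 H by auto
  obtain d' where d': "nCh c0 (one_vec, True) = Some d'" using E1 H by auto
  have "q0 \<noteq> []" using \<open>1 < length p1\<close> p1_def by auto
  then have "\<not> is_leaf c0" using path_leaf q0 by blast
  then obtain x' where x': "nX c0 = Some x'" using Tr[OF p1] by (auto simp: path_nodes_def p1_def)
  obtain qa where qa: "is_path d qa" using ex_path by blast
  obtain qb where qb: "is_path d' qb" using ex_path by blast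
  have pa: "is_path r (((zero_vec, False), c0) # ((zero_vec, False), d) # qa)"
    by (rule is_path.step[OF c0], rule is_path.step[OF d qa])
  have pb: "is_path r (((zero_vec, False), c0) # ((one_vec, True), d') # qb)"
    by (rule is_path.step[OF c0], rule is_path.step[OF d' qb])
  from P1[OF pa] have a1: "nY c0 \<noteq> Some False" "nY d \<noteq> Some False" by auto
  from P3[OF pa] obtain Ta where "Ta \<in> TT" and
    a2: "path_consistent Ta r (((zero_vec, False), c0) # ((zero_vec, False), d) # qa)"
    unfolding teachers_H_def by blast
  then obtain a where "Ta = T_n a" using TT by auto
  with a2 have a2: "path_consistent (T_n a) r (((zero_vec, False), c0) # ((zero_vec, False), d) # qa)" by simp
  from P1[OF pb] have b1: "nY c0 \<noteq> Some False" "nY d' \<noteq> Some True" by auto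
  from P3[OF pb] obtain Tb where "Tb \<in> TT" and
    b2: "path_consistent Tb r (((zero_vec, False), c0) # ((one_vec, True), d') # qb)"
    unfolding teachers_H_def by blast
  then obtain b where "Tb = T_n b" using TT by auto
  with b2 have b2: "path_consistent (T_n b) r (((zero_vec, False), c0) # ((one_vec, True), d') # qb)" by simp
  from a2 a1 x x' have A: "x a" "x' a" "nPhi c0 = psi_n a x zero_vec"
    by (auto simp: T_n_def feat_def)
  from b2 b1 x x' have B: "x b" "\<not> x' b" "nPhi c0 = psi_n b x zero_vec"
    by (auto simp: T_n_def feat_def)
  have "psi_n a x zero_vec = Some (feat a)" using A by (simp add: psi_n_def feat_def zero_vec_def)
  moreover have "psi_n b x zero_vec = Some (feat b)" using B by (simp add: psi_n_def feat_def zero_vec_def)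
  ultimately have "a = b" using A B feat_inj by auto
  then show False using A B by simp
qed

definition xk :: "nat \<Rightarrow> nat \<Rightarrow> bool" where
  "xk k = (\<lambda>m. k < length (from_nat m :: bool list) \<and> (from_nat m :: bool list) ! k)"

definition tL :: "(nat \<Rightarrow> bool, bool) ltree" where
  "tL a = (xk (length a), False, True)"

lemma tL_inf:
  assumes H: "H = {(zero_vec, False), (one_vec, True)}" and TT: "TT = range T_n"
  shows "realizes_branch h tL bs \<or> True" and "\<exists>h \<in> DtO TT H. realizes_branch h tL bs"
proof -
  show "realizes_branch h tL bs \<or> True" by simp
  have hx: "hist_X H = {zero_vec, one_vec}" unfolding H hist_X_def by auto
  define m where "m = to_nat bs"
  define h where "h = (Some \<circ> feat m) |` (UNIV - hist_X H)"
  have "h \<in> DtO TT H" unfolding DtO_def h_def TT T_n_def by blast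
  moreover have "realizes_branch h tL bs"
    unfolding realizes_branch_def
  proof (intro allI impI)
    fix i assume i: "i < length bs"
    have n0: "xk i \<noteq> zero_vec"
    proof
      assume "xk i = zero_vec"
      then have "xk i (to_nat (replicate (Suc i) True)) = False" by (simp add: zero_vec_def)
      then show False by (simp add: xk_def del: replicate_Suc)
    qed
    have n1: "xk i \<noteq> one_vec"
    proof
      assume "xk i = one_vec"
      then have "xk i (to_nat ([] :: bool list)) = True" by (simp add: one_vec_def)
      then show False by (simp add: xk_def)
    qed
    have "h (xk i) = Some (xk i m)" using n0 n1 by (simp add: h_def hx feat_def)
    also have "\<dots> = Some (bs ! i)" using i by (simp add: xk_def m_def)
    finally show "h (fst (tL (take i bs))) = Some (ledge tL (take i bs) (bs ! i))"
      using i by (simp add: tL_def ledge_def)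
  qed
  ultimately show "\<exists>h \<in> DtO TT H. realizes_branch h tL bs" by blast
qed

definition lf0 :: "(nat \<Rightarrow> bool, bool) dfft" where
  "lf0 = DNode (Some True) (Some (feat 0)) None (\<lambda>_. None)"
definition lf1 :: "(nat \<Rightarrow> bool, bool) dfft" where
  "lf1 = DNode (Some False) (Some (nfeat 1)) None (\<lambda>_. None)"
definition rch :: "(nat \<Rightarrow> bool) \<times> bool \<Rightarrow> (nat \<Rightarrow> bool, bool) dfft option" where
  "rch l = (if l = (zero_vec, False) then Some lf0 else if l = (one_vec, True) then Some lf1 else None)"
definition rt :: "(nat \<Rightarrow> bool, bool) dfft" where
  "rt = DNode None None (Some (\<lambda>i. i = 0)) rch"

lemma rt_nl: "\<not> is_leaf rt"
proof
  assume "is_leaf rt"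
  then have "rch (zero_vec, False) = None" unfolding is_leaf_def rt_def by simp
  then show False by (simp add: rch_def)
qed

lemma rt_paths: "is_path rt p \<Longrightarrow> p = [((zero_vec, False), lf0)] \<or> p = [((one_vec, True), lf1)]"
proof (erule is_path.cases)
  fix v assume "rt = v" "p = []" "is_leaf v"
  then show ?thesis using rt_nl by simp
next
  fix v l c q assume a: "rt = v" "p = (l, c) # q" "nCh v l = Some c" "is_path c q"
  have "is_leaf lf0" "is_leaf lf1" by (auto simp: is_leaf_def lf0_def lf1_def)
  moreover have "c = lf0 \<or> c = lf1" using a by (auto simp: rt_def rch_def split: if_splits)
  ultimately have "q = []" using a(4) path_leaf by blast
  then show ?thesis using a by (auto simp: rt_def rch_def split: if_splits)
qed

lemma rt_paths2: "is_path rt [((zero_vec, False), lf0)]" "is_path rt [((one_vec, True), lf1)]"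
proof -
  have "is_path lf0 []" "is_path lf1 []" by (auto intro: is_path.leaf simp: is_leaf_def lf0_def lf1_def)
  then show "is_path rt [((zero_vec, False), lf0)]" "is_path rt [((one_vec, True), lf1)]"
    by (auto intro!: is_path.step simp: rt_def rch_def zero_vec_def one_vec_def fun_eq_iff)
qed

lemma rt_shattered:
  assumes H: "H = {(zero_vec, False), (one_vec, True)}" and TT: "TT = range T_n"
  shows "dff_shattered natPhi TT H rt 1"
proof -
  have zo: "zero_vec \<noteq> one_vec" by (auto simp: zero_vec_def one_vec_def fun_eq_iff)
  have cons: "\<And>a. T_n a \<in> teachers_H TT H"
    by (auto simp: teachers_H_def TT H consistent_with_def T_n_def feat_def zero_vec_def one_vec_def)
  have edges: "{l. nCh rt l \<noteq> None} = H" using zo by (auto simp: rt_def rch_def H split: if_splits)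
  have Phi: "feat 0 \<in> natPhi" "nfeat 1 \<in> natPhi" by (auto simp: natPhi_def)
  have l0: "is_leaf lf0" "is_leaf lf1" by (auto simp: is_leaf_def lf0_def lf1_def)
  have r0: "nX rt = Some (\<lambda>i. i = 0)" "nY rt = None" "nPhi rt = None" by (simp_all add: rt_def)
  have f0: "nX lf0 = None" "nY lf0 = Some True" "nPhi lf0 = Some (feat 0)" by (simp_all add: lf0_def)
  have f1: "nX lf1 = None" "nY lf1 = Some False" "nPhi lf1 = Some (nfeat 1)" by (simp_all add: lf1_def)
  have tree: "dff_tree natPhi rt"
    unfolding dff_tree_def
  proof (intro conjI allI impI)
    fix p assume "is_path rt p"
    then have "p = [((zero_vec, False), lf0)] \<or> p = [((one_vec, True), lf1)]" by (rule rt_paths)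
    then have D: "p = [((zero_vec, False), lf0)] \<or> p = [((one_vec, True), lf1)]" .
    show "\<forall>v\<in>set (path_nodes rt p). (nX v = None) = is_leaf v \<and> nPhi v \<in> Some ` natPhi \<union> {None}"
      using D l0 r0 f0 f1 Phi rt_nl by (elim disjE; simp add: path_nodes_def)
    show "\<forall>(l, c)\<in>set p. nY c \<noteq> Some (snd l) \<longrightarrow> nPhi c \<noteq> None"
      using D l0 r0 f0 f1 Phi rt_nl by (elim disjE; simp add: path_nodes_def)
  qed (simp_all add: r0)
  have p0: "path_consistent (T_n 0) rt [((zero_vec, False), lf0)]"
    using r0 f0 by (simp add: T_n_def feat_def psi_n_def zero_vec_def)
  have p1: "path_consistent (T_n 1) rt [((one_vec, True), lf1)]"
    using r0 f1 by (simp add: T_n_def feat_def psi_n_def one_vec_def)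
  show ?thesis
    unfolding dff_shattered_def
  proof (rule conjI[OF tree], intro allI impI)
    fix p assume "is_path rt p"
    then have "p = [((zero_vec, False), lf0)] \<or> p = [((one_vec, True), lf1)]" by (rule rt_paths)
    then show "(\<forall>(l, c)\<in>set p. nY c \<noteq> Some (snd l)) \<and>
      (\<forall>k<length p. {l. nCh (path_nodes rt p ! k) l \<noteq> None} = H \<union> {(x, y). (x, Some y) \<in> lab_ex rt (take k p)}) \<and>
      (\<exists>T\<in>teachers_H TT H. path_consistent T rt p) \<and> length p = 1"
    proof (elim disjE)
      assume p: "p = [((zero_vec, False), lf0)]"
      have "\<forall>k<length p. {l. nCh (path_nodes rt p ! k) l \<noteq> None} = H \<union> {(x, y). (x, Some y) \<in> lab_ex rt (take k p)}"
        using edges by (simp add: p path_nodes_def)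
      moreover have "\<exists>T\<in>teachers_H TT H. path_consistent T rt p" using cons p0 p by blast
      ultimately show ?thesis using f0 p by simp
    next
      assume p: "p = [((one_vec, True), lf1)]"
      have "\<forall>k<length p. {l. nCh (path_nodes rt p ! k) l \<noteq> None} = H \<union> {(x, y). (x, Some y) \<in> lab_ex rt (take k p)}"
        using edges by (simp add: p path_nodes_def)
      moreover have "\<exists>T\<in>teachers_H TT H. path_consistent T rt p" using cons p1 p by blast
      ultimately show ?thesis using f1 p by simp
    qed
  qed
qed

theorem mainTheorem11:
  fixes TT :: "(nat \<Rightarrow> bool, bool) teacher set" and H :: "((nat \<Rightarrow> bool) \<times> bool) set"
  assumes "TT = range T_n"
    and "H = {(zero_vec, False), (one_vec, True)}"
  shows "DFFdim natPhi TT H = 1 \<and> Ldim (DtO TT H) = \<infinity>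
         \<and> (\<exists>t. ltree_shattered_inf (DtO TT H) t)"
proof (intro conjI)
  have inf: "ltree_shattered_inf (DtO TT H) tL"
    unfolding ltree_shattered_inf_def using tL_inf[OF assms(2,1)] by (simp add: tL_def)
  then show "\<exists>t. ltree_shattered_inf (DtO TT H) t" by blast
  have "\<And>d. ltree_shattered (DtO TT H) tL d"
    using inf unfolding ltree_shattered_inf_def ltree_shattered_def by blast
  then have S: "{enat d | d. \<exists>t. ltree_shattered (DtO TT H) t d} = range enat" by blast
  have "infinite (range enat)" by (simp add: finite_image_iff inj_on_def)
  then show "Ldim (DtO TT H) = \<infinity>" unfolding Ldim_def S Sup_enat_def by auto
  show "DFFdim natPhi TT H = 1"
    unfolding DFFdim_def
  proof (rule antisym)
    show "Sup {enat n |n. \<exists>r. dff_shattered natPhi TT H r n} \<le> 1"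
    proof (rule Sup_least)
      fix y assume "y \<in> {enat n |n. \<exists>r. dff_shattered natPhi TT H r n}"
      then obtain n r where "y = enat n" "dff_shattered natPhi TT H r n" by blast
      moreover have "\<not> n \<ge> 2" using no_height2[OF assms(2,1)] calculation(2) by blast
      ultimately show "y \<le> 1" by (simp add: one_enat_def)
    qed
    show "1 \<le> Sup {enat n |n. \<exists>r. dff_shattered natPhi TT H r n}"
      using rt_shattered[OF assms(2,1)] by (intro Sup_upper) (auto simp: one_enat_def intro!: exI[of _ 1])
  qed
qed

end
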